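(* Under the standing assumptions, for every $R>0$ there is $C(R)$ such that $|\nabla_vF(v,E)|\le C(R)\,\dfrac{M(v)}{1+|v|}$ for all $v\in\mathbb R^d$ and all $|E|\le R$.
   Context: Standing assumptions: $d\ge1$, $\alpha\in[1,2)$. $M:\mathbb R^d\to(0,\infty)$ satisfies $M(v)=M(-v)$, $\int M\,dv=1$, $|v|^{d+\alpha}M(v)\to\gamma>0$ as $|v|\to\infty$, $|\nabla_vM(v)|\le CM(v)/(1+|v|)$ and $|D_v^2M(v)|\le CM(v)$. The cross section $\sigma:\mathbb R^d\times\mathbb R^d\to\mathbb R$ satisfies $\sigma(v,v')=\sigma(v',v)$, $\nu_1\le\sigma\le\nu_2$ for constants $0<\nu_1\le\nu_2$, $|\nabla_v\sigma(v',v)|\le C/(1+|v|)$, and $|\sigma(v,v')-\nu_0|\le C/(1+|v|)$ for all $v,v'$, for some constant $\nu_0$. The collision frequency $\nu(v):=\int\sigma(v',v)M(v')\,dv'$ is assumed even. The linear Boltzmann operator is $Q(f)(v)=\int[\sigma(v,v')M(v)f(v')-\sigma(v',v)M(v')f(v)]\,dv'$. For a positive weight $w$, $L^2_{w^{-1}}$ denotes the $L^2$ space with norm $(\int|f|^2/w)^{1/2}$. For $E\in\mathbb R^d$, $F(\cdot,E)$ denotes the unique positive solution in $L^2_{M^{-1}}(\mathbb R^d)$ of $E\cdot\nabla_vF-Q(F)=0$, $\int F\,dv=1$. *)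

theory Defs
  imports "HOL-Analysis.Analysis"
begin

definition grad :: "('a::euclidean_space \<Rightarrow> real) \<Rightarrow> 'a \<Rightarrow> 'a" where
  "grad f v = (\<Sum>b\<in>Basis. frechet_derivative f (at v) b *\<^sub>R b)"

definition Qop :: "('a::euclidean_space \<Rightarrow> 'a \<Rightarrow> real) \<Rightarrow> ('a \<Rightarrow> real) \<Rightarrow> ('a \<Rightarrow> real) \<Rightarrow> 'a \<Rightarrow> real" where
  "Qop \<sigma> M f v = (LINT v'|lborel. \<sigma> v v' * M v * f v' - \<sigma> v' v * M v' * f v)"

text \<open>f is a positive solution in L^2_{M^{-1}} of  E . grad f - Q(f) = 0  with total mass 1
  (equation understood pointwise for differentiable f).\<close>
definition stationary_solution ::
  "('a::euclidean_space \<Rightarrow> 'a \<Rightarrow> real) \<Rightarrow> ('a \<Rightarrow> real) \<Rightarrow> 'a \<Rightarrow> ('a \<Rightarrow> real) \<Rightarrow> bool" where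
  "stationary_solution \<sigma> M E f \<longleftrightarrow>
     (\<forall>v. f v > 0) \<and> f \<in> borel_measurable lborel \<and>
     integrable lborel (\<lambda>v. (f v)\<^sup>2 / M v) \<and>
     integrable lborel f \<and> (LINT v|lborel. f v) = 1 \<and>
     (\<forall>v. f differentiable (at v)) \<and>
     (\<forall>v. E \<bullet> grad f v - Qop \<sigma> M f v = 0)"

end

theory Submission
  imports Defs
begin


lemma grad_inner:
  fixes f :: "'a::euclidean_space \<Rightarrow> real"
  assumes "f differentiable (at x)"
  shows "frechet_derivative f (at x) h = grad f x \<bullet> h"
proof -
  have bl: "bounded_linear (frechet_derivative f (at x))"
    using assms frechet_derivative_works has_derivative_bounded_linear by blast
  then interpret linear "frechet_derivative f (at x)" by (simp add: bounded_linear.linear)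
  have "frechet_derivative f (at x) h = frechet_derivative f (at x) (\<Sum>b\<in>Basis. (h \<bullet> b) *\<^sub>R b)"
    by (simp add: euclidean_representation)
  also have "\<dots> = (\<Sum>b\<in>Basis. (h \<bullet> b) * frechet_derivative f (at x) b)"
    by (simp add: sum scale)
  also have "\<dots> = grad f x \<bullet> h"
    unfolding grad_def inner_sum_left by (auto intro!: sum.cong simp: inner_commute)
  finally show ?thesis .
qed

lemma has_derivative_grad:
  fixes f :: "'a::euclidean_space \<Rightarrow> real"
  assumes "f differentiable (at x)"
  shows "(f has_derivative (\<lambda>h. grad f x \<bullet> h)) (at x)"
proof -
  have "(f has_derivative frechet_derivative f (at x)) (at x)"
    using assms frechet_derivative_works by blast
  moreover have "frechet_derivative f (at x) = (\<lambda>h. grad f x \<bullet> h)"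
    using grad_inner[OF assms] by auto
  ultimately show ?thesis by simp
qed

lemma grad_lipschitz:
  fixes f :: "'a::euclidean_space \<Rightarrow> real"
  assumes "convex S" "\<And>z. z \<in> S \<Longrightarrow> f differentiable (at z)"
    "\<And>z. z \<in> S \<Longrightarrow> norm (grad f z) \<le> B" "x \<in> S" "y \<in> S"
  shows "\<bar>f x - f y\<bar> \<le> B * norm (x - y)"
proof -
  have "norm (f x - f y) \<le> B * norm (x - y)"
  proof (rule differentiable_bound[OF assms(1) _ _ assms(4,5)])
    fix z assume z: "z \<in> S"
    show "(f has_derivative (\<lambda>h. grad f z \<bullet> h)) (at z within S)"
      using has_derivative_grad[OF assms(2)[OF z]] has_derivative_at_withinI by blast
    show "onorm (\<lambda>h. grad f z \<bullet> h) \<le> B"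
      by (rule onorm_le) (metis Cauchy_Schwarz_ineq2 assms(3) mult_right_mono norm_ge_zero order_trans real_norm_def z)
  qed
  then show ?thesis by simp
qed



lemma tail_bounds:
  fixes M :: "'a::euclidean_space \<Rightarrow> real"
  assumes pos: "\<forall>v. M v > 0" and cont: "continuous_on UNIV M" and g0: "\<gamma> > 0"
    and lim: "((\<lambda>v. norm v powr N * M v) \<longlongrightarrow> \<gamma>) at_infinity" and N: "N \<ge> 0"
  shows "\<exists>c1 c2. c1 > 0 \<and> (\<forall>z. c1 \<le> M z * (1+norm z) powr N \<and> M z * (1+norm z) powr N \<le> c2)"
proof -
  define g where "g z = M z * (1+norm z) powr N" for z
  have gpos: "g z > 0" for z
  proof -
    have "0 < 1 + norm z" by (simp add: add_pos_nonneg)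
    then show ?thesis using pos by (simp add: g_def)
  qed
  have gcont: "continuous_on UNIV g" unfolding g_def
    by (intro continuous_intros cont) (smt (verit) norm_ge_zero)
  have "\<forall>\<^sub>F v in at_infinity. norm v powr N * M v \<in> {\<gamma>/2<..<2*\<gamma>}"
    using lim g0 by (intro topological_tendstoD) auto
  then obtain \<rho>0 where \<rho>0: "\<And>z. norm z \<ge> \<rho>0 \<Longrightarrow> norm z powr N * M z \<in> {\<gamma>/2<..<2*\<gamma>}"
    unfolding eventually_at_infinity by blast
  define \<rho> where "\<rho> = max \<rho>0 1"
  have far: "\<gamma>/2 \<le> g z \<and> g z \<le> 2 powr N * (2*\<gamma>)" if "norm z \<ge> \<rho>" for z
  proof -
    have z1: "norm z \<ge> 1" "norm z \<ge> \<rho>0" using that by (auto simp: \<rho>_def)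
    have b: "\<gamma>/2 < norm z powr N * M z" "norm z powr N * M z < 2*\<gamma>" using \<rho>0[OF z1(2)] by auto
    have "norm z powr N \<le> (1+norm z) powr N" by (intro powr_mono2) (use N in auto)
    hence "norm z powr N * M z \<le> g z" unfolding g_def using pos
      by (metis mult.commute mult_le_cancel_left_pos)
    moreover have "(1+norm z) powr N \<le> (2*norm z) powr N" by (intro powr_mono2) (use N z1 in auto)
    hence "g z \<le> (2 * norm z) powr N * M z" unfolding g_def using pos
      by (metis mult.commute mult_le_cancel_left_pos)
    moreover have "(2 * norm z) powr N * M z = 2 powr N * (norm z powr N * M z)"
      by (simp add: powr_mult)
    moreover have "2 powr N * (norm z powr N * M z) \<le> 2 powr N * (2*\<gamma>)"
      using b by (intro mult_left_mono) auto
    ultimately show ?thesis using b by linarith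
  qed
  have cpt: "compact (cball (0::'a) \<rho>)" by simp
  have ne: "cball (0::'a) \<rho> \<noteq> {}" by (auto simp: \<rho>_def)
  obtain a where a: "a \<in> cball 0 \<rho>" "\<And>y. y \<in> cball 0 \<rho> \<Longrightarrow> g a \<le> g y"
    using continuous_attains_inf[OF cpt ne continuous_on_subset[OF gcont]] by blast
  obtain b where b: "b \<in> cball 0 \<rho>" "\<And>y. y \<in> cball 0 \<rho> \<Longrightarrow> g y \<le> g b"
    using continuous_attains_sup[OF cpt ne continuous_on_subset[OF gcont]] by blast
  define c1 where "c1 = min (g a) (\<gamma>/2)"
  define c2 where "c2 = max (g b) (2 powr N * (2*\<gamma>))"
  have "c1 > 0" using gpos g0 by (simp add: c1_def)
  moreover have "c1 \<le> g z \<and> g z \<le> c2" for z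
  proof (cases "norm z \<ge> \<rho>")
    case True then show ?thesis using far[OF True] by (auto simp: c1_def c2_def)
  next
    case False then have "z \<in> cball 0 \<rho>" by auto
    then show ?thesis using a b by (force simp: c1_def c2_def)
  qed
  ultimately show ?thesis unfolding g_def by blast
qed

lemma ratio_bound:
  fixes M :: "'a::euclidean_space \<Rightarrow> real"
  assumes pos: "\<forall>v. M v > 0" and c1: "c1 > 0" and N: "N \<ge> 0"
    and bnd: "\<forall>z. c1 \<le> M z * (1+norm z) powr N \<and> M z * (1+norm z) powr N \<le> c2"
  shows "M z \<le> (c2/c1) * (1 + norm (z - v)) powr N * M v"
proof -
  define a where "a = 1 + norm z"
  define b where "b = 1 + norm v"
  define c where "c = 1 + norm (z - v)"
  have p1: "a > 0" "b > 0" "c > 0" unfolding a_def b_def c_def by (auto intro: add_pos_nonneg)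
  have "norm v \<le> norm z + norm (z - v)" using norm_triangle_ineq4[of z "z-v"] by simp
  moreover have "a * c = 1 + norm z + norm (z-v) + norm z * norm (z - v)"
    unfolding a_def c_def by (simp add: algebra_simps)
  moreover have "0 \<le> norm z * norm (z - v)" by simp
  ultimately have abc: "b \<le> a * c" unfolding b_def by linarith
  have pe: "b powr N \<le> a powr N * c powr N"
    using powr_mono2[OF N _ abc] p1 by (simp add: powr_mult)
  have Mz: "M z * a powr N \<le> c2" using bnd a_def by auto
  have Mv: "c1 \<le> M v * b powr N" using bnd b_def by auto
  have pa: "a powr N > 0" "b powr N > 0" "c powr N > 0" using p1 by auto
  have "M z * a powr N * c1 * c powr N \<le> c2 * c1 * c powr N"
    using Mz pa c1 by (intro mult_right_mono) auto
  also have "\<dots> \<le> c2 * (M v * b powr N) * c powr N"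
  proof -
    have "c2 \<ge> 0" using Mz pa pos by (smt (verit) mult_pos_pos)
    then show ?thesis using Mv pa by (intro mult_right_mono mult_left_mono) auto
  qed
  also have "\<dots> \<le> c2 * M v * (a powr N * c powr N) * c powr N"
  proof -
    have "c2 \<ge> 0" using Mz pa pos by (smt (verit) mult_pos_pos)
    then have "c2 * M v \<ge> 0" using pos by (simp add: less_imp_le)
    moreover have "b powr N * c powr N \<le> a powr N * c powr N * c powr N"
      by (rule mult_right_mono[OF pe]) simp
    ultimately show ?thesis using mult_left_mono by (metis mult.assoc)
  qed
  finally have "M z * a powr N * c1 * c powr N \<le> c2 * M v * (a powr N * c powr N) * c powr N" .
  hence "(M z * c1) * (a powr N * c powr N) \<le> (c2 * M v * c powr N) * (a powr N * c powr N)"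
    by (simp add: algebra_simps)
  hence "M z * c1 \<le> c2 * M v * c powr N" using pa by (simp add: mult_le_cancel_right)
  hence "M z \<le> (c2 * M v * c powr N) / c1" using c1 by (simp add: field_simps)
  then show ?thesis unfolding c_def by (simp add: field_simps)
qed



locale kin =
  fixes M :: "'a::euclidean_space \<Rightarrow> real" and \<sigma> :: "'a \<Rightarrow> 'a \<Rightarrow> real"
    and \<nu>1 \<nu>2 Cg CM :: real
  assumes Mpos: "\<And>v. M v > 0"
    and Mint: "integrable lborel M" and Mone: "(LINT v|lborel. M v) = 1"
    and Mdiff: "\<And>v. M differentiable (at v)"
    and Mgrad: "\<And>v. norm (grad M v) \<le> CM * M v / (1 + norm v)"
    and smeas: "(\<lambda>(v, v'). \<sigma> v v') \<in> borel_measurable (lborel \<Otimes>\<^sub>M lborel)"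
    and ssym: "\<And>v v'. \<sigma> v v' = \<sigma> v' v"
    and nu1: "0 < \<nu>1"
    and sbnd: "\<And>v v'. \<nu>1 \<le> \<sigma> v v' \<and> \<sigma> v v' \<le> \<nu>2"
    and sdiff: "\<And>v' v. \<sigma> v' differentiable (at v)"
    and sgrad: "\<And>v v'. norm (grad (\<sigma> v') v) \<le> Cg / (1 + norm v)"
begin

lemma Cg_nonneg: "Cg \<ge> 0"
proof -
  have "0 \<le> Cg / (1 + norm (0::'a))" using sgrad[of 0 0] norm_ge_zero order_trans by blast
  then show ?thesis by simp
qed

lemma sec_meas: "(\<lambda>v'. \<sigma> v' x) \<in> borel_measurable lborel"
proof -
  have "(\<lambda>v'. (\<lambda>(v, v'). \<sigma> v v') (v', x)) \<in> borel_measurable lborel"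
    using smeas by measurable
  then show ?thesis by simp
qed

lemma near_norm:
  assumes "norm (z - x) \<le> 1/2"
  shows "1 + norm x \<le> 2 * (1 + norm z)"
proof -
  have "norm x \<le> norm z + norm (z - x)" using norm_triangle_ineq4[of z "z-x"] by simp
  then have "norm x \<le> 1 + 2 * norm z" using assms norm_ge_zero[of z] by linarith
  then show ?thesis by (simp add: algebra_simps)
qed

lemma sabs: "\<bar>\<sigma> v v'\<bar> \<le> \<nu>2"
  using sbnd[of v v'] nu1 by auto

lemma sigma_lip:
  assumes "norm (y - x) \<le> 1/2"
  shows "\<bar>\<sigma> v' y - \<sigma> v' x\<bar> \<le> 2 * Cg / (1 + norm x) * norm (y - x)"
proof (rule grad_lipschitz[of "cball x (1/2)"])
  fix z assume z: "z \<in> cball x (1/2)"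
  then have "norm (z - x) \<le> 1/2" by (simp add: dist_norm norm_minus_commute)
  then have h: "1 + norm x \<le> 2 * (1 + norm z)" by (rule near_norm)
  have "norm (grad (\<sigma> v') z) \<le> Cg / (1 + norm z)" by (rule sgrad)
  also have "\<dots> \<le> 2 * Cg / (1 + norm x)"
  proof -
    have p: "0 < 1 + norm z" "0 < 1 + norm x" by (auto intro: add_pos_nonneg)
    have "Cg / (1 + norm z) = 2 * Cg / (2 * (1 + norm z))" using p by (simp add: field_simps)
    also have "\<dots> \<le> 2 * Cg / (1 + norm x)"
      using h Cg_nonneg p by (intro divide_left_mono) auto
    finally show ?thesis .
  qed
  finally show "norm (grad (\<sigma> v') z) \<le> 2 * Cg / (1 + norm x)" .
qed (use assms sdiff in \<open>auto simp: dist_norm norm_minus_commute\<close>)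

definition Kop :: "('a \<Rightarrow> real) \<Rightarrow> 'a \<Rightarrow> real" where
  "Kop f x = (LINT v'|lborel. \<sigma> v' x * f v')"

lemma Kop_integrable:
  assumes "integrable lborel f"
  shows "integrable lborel (\<lambda>v'. \<sigma> v' x * f v')"
proof (rule Bochner_Integration.integrable_bound[of _ "\<lambda>v'. \<nu>2 * norm (f v')"])
  show "integrable lborel (\<lambda>v'. \<nu>2 * norm (f v'))" using assms by auto
  show "(\<lambda>v'. \<sigma> v' x * f v') \<in> borel_measurable lborel"
    using sec_meas assms by measurable
  show "AE v' in lborel. norm (\<sigma> v' x * f v') \<le> norm (\<nu>2 * norm (f v'))"
  proof (intro AE_I2)
    fix v'
    have "\<bar>\<sigma> v' x\<bar> \<le> \<bar>\<nu>2\<bar>" using sabs[of v' x] by linarith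
    then have "\<bar>\<sigma> v' x\<bar> * \<bar>f v'\<bar> \<le> \<bar>\<nu>2\<bar> * \<bar>f v'\<bar>" by (rule mult_right_mono) simp
    then show "norm (\<sigma> v' x * f v') \<le> norm (\<nu>2 * norm (f v'))" by (simp add: abs_mult)
  qed
qed

lemma Kop_bounds:
  assumes "integrable lborel f" "\<And>v. f v \<ge> 0" "(LINT v|lborel. f v) = 1"
  shows "\<nu>1 \<le> Kop f x" "Kop f x \<le> \<nu>2"
proof -
  have "(LINT v'|lborel. \<nu>1 * f v') \<le> Kop f x" unfolding Kop_def
    using assms Kop_integrable sbnd by (intro integral_mono) (auto intro!: mult_right_mono)
  then show "\<nu>1 \<le> Kop f x" using assms by simp
  have "Kop f x \<le> (LINT v'|lborel. \<nu>2 * f v')" unfolding Kop_def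
    using assms Kop_integrable sbnd by (intro integral_mono) (auto intro!: mult_right_mono)
  then show "Kop f x \<le> \<nu>2" using assms by simp
qed

lemma Kop_lip:
  assumes "integrable lborel f" "\<And>v. f v \<ge> 0" "(LINT v|lborel. f v) = 1"
    and "norm (y - x) \<le> 1/2"
  shows "\<bar>Kop f y - Kop f x\<bar> \<le> 2 * Cg / (1 + norm x) * norm (y - x)"
proof -
  let ?L = "2 * Cg / (1 + norm x) * norm (y - x)"
  have "Kop f y - Kop f x = (LINT v'|lborel. (\<sigma> v' y - \<sigma> v' x) * f v')"
    unfolding Kop_def using Kop_integrable[OF assms(1)]
    by (simp add: left_diff_distrib Bochner_Integration.integral_diff)
  also have "\<bar>\<dots>\<bar> \<le> (LINT v'|lborel. ?L * f v')"
  proof -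
    have i: "integrable lborel (\<lambda>v'. (\<sigma> v' y - \<sigma> v' x) * f v')"
      using Kop_integrable[OF assms(1)] by (simp add: left_diff_distrib)
    have "\<bar>LINT v'|lborel. (\<sigma> v' y - \<sigma> v' x) * f v'\<bar> \<le> (LINT v'|lborel. \<bar>(\<sigma> v' y - \<sigma> v' x) * f v'\<bar>)"
      by (rule integral_abs_bound)
    also have "\<dots> \<le> (LINT v'|lborel. ?L * f v')"
    proof (rule integral_mono)
      show "integrable lborel (\<lambda>v'. \<bar>(\<sigma> v' y - \<sigma> v' x) * f v'\<bar>)" using i by auto
      show "integrable lborel (\<lambda>v'. ?L * f v')" using assms by auto
      fix v' show "\<bar>(\<sigma> v' y - \<sigma> v' x) * f v'\<bar> \<le> ?L * f v'"
      proof -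
        have "\<bar>\<sigma> v' y - \<sigma> v' x\<bar> * f v' \<le> ?L * f v'"
          using sigma_lip[OF assms(4), of v'] assms(2)[of v'] by (rule mult_right_mono)
        then show ?thesis using assms(2)[of v'] by (simp add: abs_mult)
      qed
    qed
    finally show ?thesis .
  qed
  also have "\<dots> = ?L" using assms by simp
  finally show ?thesis .
qed

end


lemma lip_isCont:
  fixes g :: "'a::real_normed_vector \<Rightarrow> real"
  assumes "\<And>y. norm (y - x) \<le> 1/2 \<Longrightarrow> \<bar>g y - g x\<bar> \<le> L * norm (y - x)" "L \<ge> 0"
  shows "isCont g x"
  unfolding continuous_at_eps_delta
proof (intro allI impI)
  fix e :: real assume e: "e > 0"
  define d where "d = min (1/2) (e / (L + 1))"
  have d: "d > 0" using e assms(2) by (simp add: d_def)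
  show "\<exists>d>0. \<forall>y. dist y x < d \<longrightarrow> dist (g y) (g x) < e"
  proof (intro exI[of _ d] conjI allI impI d)
    fix y assume "dist y x < d"
    then have y: "norm (y - x) < d" by (simp add: dist_norm)
    then have "\<bar>g y - g x\<bar> \<le> L * norm (y - x)" using assms(1) by (simp add: d_def)
    also have "\<dots> \<le> L * d" using y assms(2) by (intro mult_left_mono) auto
    also have "\<dots> < (L + 1) * d" using d by (simp add: algebra_simps)
    also have "\<dots> \<le> (L+1) * (e / (L + 1))" using assms(2) by (intro mult_left_mono) (auto simp: d_def)
    also have "\<dots> = e" using assms(2) by simp
    finally show "dist (g y) (g x) < e" by (simp add: dist_real_def)
  qed
qed

context kin begin

lemma Kop_cont:
  assumes "integrable lborel f" "\<And>v. f v \<ge> 0" "(LINT v|lborel. f v) = 1"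
  shows "continuous_on UNIV (Kop f)"
proof -
  have "isCont (Kop f) x" for x
  proof (rule lip_isCont)
    fix y :: 'a assume "norm (y - x) \<le> 1/2"
    then have "\<bar>Kop f y - Kop f x\<bar> \<le> 2 * Cg / (1 + norm x) * norm (y - x)"
      by (rule Kop_lip[OF assms])
    also have "\<dots> \<le> 2 * Cg * norm (y - x)"
    proof -
      have "2 * Cg / (1 + norm x) \<le> 2 * Cg" using Cg_nonneg
        by (simp add: divide_le_eq add_pos_nonneg mult_le_cancel_left1)
      then show ?thesis by (intro mult_right_mono) auto
    qed
    finally show "\<bar>Kop f y - Kop f x\<bar> \<le> 2 * Cg * norm (y - x)" .
  qed (use Cg_nonneg in simp)
  then show ?thesis by (simp add: continuous_at_imp_continuous_on)
qed

lemma Mcont: "continuous_on UNIV M"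
  by (intro continuous_at_imp_continuous_on ballI differentiable_imp_continuous_within Mdiff)

lemma Qop_eq:
  assumes "integrable lborel f"
  shows "Qop \<sigma> M f v = M v * Kop f v - Kop M v * f v"
proof -
  have "Qop \<sigma> M f v = (LINT v'|lborel. M v * (\<sigma> v' v * f v') - f v * (\<sigma> v' v * M v'))"
    unfolding Qop_def
  proof (intro Bochner_Integration.integral_cong refl)
    fix v' have "\<sigma> v v' = \<sigma> v' v" by (rule ssym)
    then show "\<sigma> v v' * M v * f v' - \<sigma> v' v * M v' * f v = M v * (\<sigma> v' v * f v') - f v * (\<sigma> v' v * M v')"
      by (simp add: algebra_simps)
  qed
  also have "\<dots> = M v * Kop f v - f v * Kop M v"
    unfolding Kop_def using Kop_integrable[OF assms, of v] Kop_integrable[OF Mint, of v]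
    by (simp add: Bochner_Integration.integral_diff)
  finally show ?thesis by simp
qed

end

locale sol = kin +
  fixes E :: 'a and F :: "'a \<Rightarrow> real"
  assumes Fpos: "\<And>v. F v > 0" and Fint: "integrable lborel F" and Fone: "(LINT v|lborel. F v) = 1"
    and Fdiff: "\<And>v. F differentiable (at v)"
    and Feq: "\<And>v. E \<bullet> grad F v - Qop \<sigma> M F v = 0"
begin

lemma Mnn: "M v \<ge> 0" using Mpos[of v] by simp
lemma Fnn: "F v \<ge> 0" using Fpos[of v] by simp

abbreviation "nu \<equiv> Kop M"
abbreviation "kk \<equiv> Kop F"

lemma nu_bounds: "\<nu>1 \<le> nu x" "nu x \<le> \<nu>2"
  using Kop_bounds[OF Mint Mnn Mone] by blast+

lemma kk_bounds: "\<nu>1 \<le> kk x" "kk x \<le> \<nu>2"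
  using Kop_bounds[OF Fint Fnn Fone] by blast+

lemma nu_cont: "continuous_on UNIV nu"
  using Kop_cont[OF Mint Mnn Mone] by blast

lemma kk_cont: "continuous_on UNIV kk"
  using Kop_cont[OF Fint Fnn Fone] by blast

lemma Feq': "grad F x \<bullet> E = M x * kk x - nu x * F x"
  using Feq[of x] Qop_eq[OF Fint, of x] by (simp add: inner_commute)

lemma F_line_deriv:
  "((\<lambda>s. F (v - s *\<^sub>R E)) has_real_derivative - (grad F (v - s *\<^sub>R E) \<bullet> E)) (at s)"
proof -
  have l: "((\<lambda>s. v - s *\<^sub>R E) has_derivative (\<lambda>h. - (h *\<^sub>R E))) (at s)"
    by (auto intro!: derivative_eq_intros)
  have "((\<lambda>s. F (v - s *\<^sub>R E)) has_derivative (\<lambda>h. grad F (v - s *\<^sub>R E) \<bullet> (- (h *\<^sub>R E)))) (at s)"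
    using has_derivative_compose[OF l has_derivative_grad[OF Fdiff]] by simp
  moreover have "(\<lambda>h. grad F (v - s *\<^sub>R E) \<bullet> (- (h *\<^sub>R E))) = (*) (- (grad F (v - s *\<^sub>R E) \<bullet> E))"
    by (auto simp: fun_eq_iff)
  ultimately show ?thesis by (simp add: has_field_derivative_def)
qed

definition "Af v s = integral {0..s} (\<lambda>r. nu (v - r *\<^sub>R E))"
definition "gf v s = exp (- Af v s) * (M (v - s *\<^sub>R E) * kk (v - s *\<^sub>R E))"
definition "Ig v T = integral {0..T} (gf v)"
definition "hf v s = F (v - s *\<^sub>R E) * exp (- Af v s)"

lemma nu_line_cont: "continuous_on S (\<lambda>r. nu (v - r *\<^sub>R E))"
  by (intro continuous_on_compose2[OF nu_cont] continuous_intros) auto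

lemma kk_line_cont: "continuous_on S (\<lambda>r. kk (v - r *\<^sub>R E))"
  by (intro continuous_on_compose2[OF kk_cont] continuous_intros) auto

lemma M_line_cont: "continuous_on S (\<lambda>r. M (v - r *\<^sub>R E))"
  by (intro continuous_on_compose2[OF Mcont] continuous_intros) auto

lemma Af_deriv:
  assumes "s \<in> {0..T}"
  shows "(Af v has_real_derivative nu (v - s *\<^sub>R E)) (at s within {0..T})"
  unfolding Af_def[abs_def] by (rule integral_has_real_derivative[OF nu_line_cont assms])

lemma Af_lower:
  assumes "0 \<le> s"
  shows "\<nu>1 * s \<le> Af v s"
proof -
  have "integral {0..s} (\<lambda>r. \<nu>1) \<le> Af v s"
    unfolding Af_def using nu_bounds
    by (intro integral_le integrable_continuous_real nu_line_cont) auto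
  then show ?thesis using assms by (simp add: mult.commute)
qed

lemma Af_cont: "continuous_on {0..T} (Af v)"
  unfolding continuous_on_eq_continuous_within
proof
  fix s assume "s \<in> {0..T}"
  then show "continuous (at s within {0..T}) (Af v)" by (rule DERIV_continuous[OF Af_deriv])
qed

lemma gf_cont: "continuous_on {0..T} (gf v)"
  unfolding gf_def
  by (intro continuous_intros Af_cont M_line_cont kk_line_cont)

lemma hf_deriv:
  assumes "s \<in> {0..T}"
  shows "(hf v has_vector_derivative - gf v s) (at s within {0..T})"
proof -
  let ?x = "v - s *\<^sub>R E"
  have d1: "((\<lambda>s. F (v - s *\<^sub>R E)) has_real_derivative - (grad F ?x \<bullet> E)) (at s within {0..T})"
    using F_line_deriv has_field_derivative_at_within by blast
  have d2: "((\<lambda>s. exp (- Af v s)) has_real_derivative exp (- Af v s) * (- nu ?x)) (at s within {0..T})"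
    by (rule DERIV_chain2[OF DERIV_exp]) (intro derivative_intros Af_deriv[OF assms])
  have "(hf v has_real_derivative
      (- (grad F ?x \<bullet> E)) * exp (- Af v s) + exp (- Af v s) * (- nu ?x) * F ?x) (at s within {0..T})"
    unfolding hf_def[abs_def] by (rule DERIV_mult[OF d1 d2])
  moreover have "(- (grad F ?x \<bullet> E)) * exp (- Af v s) + exp (- Af v s) * (- nu ?x) * F ?x = - gf v s"
    unfolding gf_def Feq' by (simp add: algebra_simps)
  ultimately show ?thesis by (simp add: has_real_derivative_iff_has_vector_derivative)
qed

lemma Ig_eq:
  assumes "0 \<le> T"
  shows "Ig v T = F v - hf v T"
proof -
  have i: "((\<lambda>s. - gf v s) has_integral (hf v T - hf v 0)) {0..T}"
    by (rule fundamental_theorem_of_calculus[OF assms hf_deriv])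
  have "(gf v has_integral - (hf v T - hf v 0)) {0..T}"
    using has_integral_neg[OF i] by simp
  moreover have "hf v 0 = F v" by (simp add: hf_def Af_def)
  ultimately show ?thesis unfolding Ig_def by (simp add: integral_unique)
qed

lemma gf_pos: "gf v s > 0"
  unfolding gf_def
  by (intro mult_pos_pos exp_gt_zero Mpos) (use kk_bounds(1)[of "v - s *\<^sub>R E"] nu1 in linarith)

lemma hf_pos: "hf v s > 0"
  unfolding hf_def by (intro mult_pos_pos Fpos exp_gt_zero)

end


lemma exp_poly_bound:
  fixes a :: real
  assumes a: "a > 0"
  shows "\<exists>D>0. \<forall>s\<ge>0. (1+s)^p \<le> D * exp (a* s/2)"
proof -
  define l where "l = a / (2 * (real p + 1))"
  have l: "l > 0" using a by (simp add: l_def)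
  have pl: "real p * l \<le> a / 2" using a by (simp add: l_def field_simps)
  define D where "D = (1 + 1/l)^p"
  have "1 + 1/l > 0" using l by (simp add: add_pos_pos)
  then have D: "D > 0" by (simp add: D_def)
  have "(1+s)^p \<le> D * exp (a* s/2)" if s: "s \<ge> 0" for s
  proof -
    have "(1 + 1/l) * (1 + l* s) = 1 + l* s + 1/l + s" using l by (simp add: field_simps)
    then have "1 + s \<le> (1 + 1/l) * (1 + l* s)" using l s by simp
    also have "\<dots> \<le> (1 + 1/l) * exp (l* s)"
      using l by (intro mult_left_mono exp_ge_add_one_self) auto
    finally have b: "1 + s \<le> (1 + 1/l) * exp (l* s)" .
    have "(1+s)^p \<le> ((1 + 1/l) * exp (l* s))^p"
      using b s by (intro power_mono) auto
    also have "\<dots> = D * exp (real p * (l* s))"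
      by (simp add: D_def power_mult_distrib exp_of_nat_mult)
    also have "\<dots> \<le> D * exp (a* s/2)"
    proof -
      have "real p * (l* s) \<le> a* s/2" using pl s
        by (metis mult.assoc mult_right_mono times_divide_eq_left mult.commute)
      then show ?thesis using D by simp
    qed
    finally show ?thesis .
  qed
  then show ?thesis using D by blast
qed

lemma exp_poly_int:
  fixes a :: real
  assumes a: "a > 0"
  shows "\<exists>J. \<forall>T\<ge>0. integral {0..T} (\<lambda>s. exp (- a* s) * (1+s)^p) \<le> J"
proof -
  obtain D where D: "D > 0" "\<And>s. s \<ge> 0 \<Longrightarrow> (1+s)^p \<le> D * exp (a* s/2)"
    using exp_poly_bound[OF a, of p] by blast
  have "integral {0..T} (\<lambda>s. exp (- a* s) * (1+s)^p) \<le> 2* D/a" if T: "T \<ge> 0" for T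
  proof -
    have "integral {0..T} (\<lambda>s. exp (- a* s) * (1+s)^p) \<le> integral {0..T} (\<lambda>s. D * exp (- (a* s/2)))"
    proof (rule integral_le)
      show "(\<lambda>s. exp (- a* s) * (1+s)^p) integrable_on {0..T}"
        by (intro integrable_continuous_real continuous_intros)
      show "(\<lambda>s. D * exp (- (a* s/2))) integrable_on {0..T}"
        by (intro integrable_continuous_real continuous_intros) auto
      fix s assume "s \<in> {0..T}"
      then have "exp (- a* s) * (1+s)^p \<le> exp (- a* s) * (D * exp (a* s/2))"
        using D by (intro mult_left_mono) auto
      also have "\<dots> = D * exp (- (a* s/2))"
        by (simp add: exp_add[symmetric] mult.commute)
      finally show "exp (- a* s) * (1+s)^p \<le> D * exp (- (a* s/2))" .
    qed
    also have "integral {0..T} (\<lambda>s. D * exp (- (a* s/2))) = (2* D/a) * (1 - exp (- (a* T/2)))"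
    proof -
      have i: "((\<lambda>s. D * exp (- (a* s/2))) has_integral
          ((- (2* D/a) * exp (- (a* T/2))) - (- (2* D/a) * exp (- (a* 0/2))))) {0..T}"
      proof (rule fundamental_theorem_of_calculus[OF T])
        fix s assume "s \<in> {0..T}"
        show "((\<lambda>s. - (2* D/a) * exp (- (a* s/2))) has_vector_derivative D * exp (- (a* s/2))) (at s within {0..T})"
          unfolding has_real_derivative_iff_has_vector_derivative[symmetric]
          using a by (auto intro!: derivative_eq_intros simp: field_simps)
      qed
      then have "integral {0..T} (\<lambda>s. D * exp (- (a* s/2))) = (- (2*D/a) * exp (- (a* T/2))) - (- (2*D/a) * exp (- (a*0/2)))"
        by (rule integral_unique)
      then show ?thesis by (simp add: algebra_simps)
    qed
    also have "\<dots> \<le> (2* D/a) * 1"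
      using D a by (intro mult_left_mono) auto
    also have "\<dots> = 2* D/a" by simp
    finally show ?thesis .
  qed
  then show ?thesis by blast
qed

lemma exp_diff_bound:
  fixes a b m :: real
  assumes "m \<le> a" "m \<le> b"
  shows "\<bar>exp (- a) - exp (- b)\<bar> \<le> exp (- m) * \<bar>a - b\<bar>"
proof -
  have *: "exp (- x) - exp (- y) \<le> exp (- m) * (y - x)" if "m \<le> x" "x \<le> y" for x y
  proof -
    have "exp (- x) - exp (- y) = exp (- x) * (1 - exp (- (y - x)))"
      by (simp add: algebra_simps exp_diff exp_minus field_simps)
    also have "\<dots> \<le> exp (- x) * (y - x)"
    proof -
      have "1 - (y - x) \<le> exp (- (y - x))" using exp_ge_add_one_self[of "- (y - x)"] by linarith
      then show ?thesis by (intro mult_left_mono) auto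
    qed
    also have "\<dots> \<le> exp (- m) * (y - x)" using that by (intro mult_right_mono) auto
    finally show ?thesis .
  qed
  show ?thesis
  proof (cases "a \<le> b")
    case True
    then have "exp (- b) \<le> exp (- a)" by simp
    then show ?thesis using *[OF assms(1) True] True by (simp add: abs_if)
  next
    case False
    then have "exp (- a) \<le> exp (- b)" by simp
    then show ?thesis using *[OF assms(2)] False by (simp add: abs_if)
  qed
qed



lemma arith_main:
  fixes ew ev e My Mx ky kx s c1 q u1 m1 n2 LM C0 Mv :: real
  assumes e0: "0 \<le> e" and ev: "0 \<le> ev" "ev \<le> e"
    and dE: "\<bar>ew - ev\<bar> \<le> e * (s * c1 * q * u1)"
    and My: "0 \<le> My" "My \<le> m1 * Mx"
    and ky: "0 \<le> ky" "ky \<le> n2"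
    and dM: "\<bar>My - Mx\<bar> \<le> LM * Mx * q * u1"
    and dk: "\<bar>ky - kx\<bar> \<le> c1 * q * u1"
    and Mx: "0 \<le> Mx" "Mx \<le> C0 * q^k * Mv"
    and nn: "0 \<le> s" "0 \<le> c1" "0 \<le> q" "0 \<le> u1" "0 \<le> m1" "0 \<le> n2" "0 \<le> LM"
  shows "\<bar>ew * (My * ky) - ev * (Mx * kx)\<bar> \<le> e * (C0 * q^(Suc k) * Mv * u1) * (s * c1 * m1 * n2 + LM * n2 + c1)"
proof -
  have eq: "ew * (My * ky) - ev * (Mx * kx) = (ew - ev) * (My * ky) + ev * ((My - Mx) * ky + Mx * (ky - kx))"
    by (simp add: algebra_simps)
  have a1: "\<bar>(ew - ev) * (My * ky)\<bar> \<le> e * (s * c1 * q * u1) * (m1 * Mx * n2)"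
  proof -
    have "\<bar>(ew - ev) * (My * ky)\<bar> = \<bar>ew - ev\<bar> * (My * ky)" using My ky by (simp add: abs_mult)
    also have "\<dots> \<le> e * (s * c1 * q * u1) * (m1 * Mx * n2)"
      using dE My ky nn e0 Mx by (intro mult_mono) (auto intro!: mult_nonneg_nonneg)
    finally show ?thesis .
  qed
  have mx: "m1 * Mx * n2 \<le> m1 * (C0 * q^k * Mv) * n2"
    using Mx nn by (intro mult_right_mono mult_left_mono) auto
  have a1': "\<bar>(ew - ev) * (My * ky)\<bar> \<le> e * (s * c1 * q * u1) * (m1 * (C0 * q^k * Mv) * n2)"
    using a1 mult_left_mono[OF mx, of "e * (s * c1 * q * u1)"] e0 nn
    by (smt (verit) mult_nonneg_nonneg)
  have b1: "\<bar>(My - Mx) * ky\<bar> \<le> LM * Mx * q * u1 * n2"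
    using dM ky by (simp add: abs_mult) (intro mult_mono, auto)
  have b2: "\<bar>Mx * (ky - kx)\<bar> \<le> Mx * (c1 * q * u1)"
    using dk Mx by (simp add: abs_mult mult_left_mono)
  have b: "\<bar>(My - Mx) * ky + Mx * (ky - kx)\<bar> \<le> (LM * n2 + c1) * q * u1 * Mx"
  proof -
    have "\<bar>(My - Mx) * ky + Mx * (ky - kx)\<bar> \<le> \<bar>(My - Mx) * ky\<bar> + \<bar>Mx * (ky - kx)\<bar>" by (rule abs_triangle_ineq)
    also have "\<dots> \<le> LM * Mx * q * u1 * n2 + Mx * (c1 * q * u1)" using b1 b2 by linarith
    also have "\<dots> = (LM * n2 + c1) * q * u1 * Mx" by (simp add: algebra_simps)
    finally show ?thesis .
  qed
  have b': "\<bar>(My - Mx) * ky + Mx * (ky - kx)\<bar> \<le> (LM * n2 + c1) * q * u1 * (C0 * q^k * Mv)"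
    using b Mx nn mult_left_mono[OF Mx(2), of "(LM * n2 + c1) * q * u1"]
    by (smt (verit) mult_nonneg_nonneg)
  have a2: "\<bar>ev * ((My - Mx) * ky + Mx * (ky - kx))\<bar> \<le> e * ((LM * n2 + c1) * q * u1 * (C0 * q^k * Mv))"
  proof -
    have "\<bar>ev * ((My - Mx) * ky + Mx * (ky - kx))\<bar> = ev * \<bar>(My - Mx) * ky + Mx * (ky - kx)\<bar>"
      using ev by (simp add: abs_mult)
    also have "\<dots> \<le> e * ((LM * n2 + c1) * q * u1 * (C0 * q^k * Mv))"
      using b' ev by (intro mult_mono) auto
    finally show ?thesis .
  qed
  have "\<bar>ew * (My * ky) - ev * (Mx * kx)\<bar> \<le> \<bar>(ew - ev) * (My * ky)\<bar> + \<bar>ev * ((My - Mx) * ky + Mx * (ky - kx))\<bar>"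
    unfolding eq by (rule abs_triangle_ineq)
  also have "\<dots> \<le> e * (s * c1 * q * u1) * (m1 * (C0 * q^k * Mv) * n2) + e * ((LM * n2 + c1) * q * u1 * (C0 * q^k * Mv))"
    using a1' a2 by linarith
  also have "\<dots> = e * (C0 * q^(Suc k) * Mv * u1) * (s * c1 * m1 * n2 + LM * n2 + c1)"
    by (simp add: algebra_simps)
  finally show ?thesis .
qed



locale kin2 = kin +
  fixes C0 :: real and kM :: nat and R :: real
  assumes C0pos: "C0 > 0" and Rnn: "R \<ge> 0"
    and Mratio: "\<And>z v. M z \<le> C0 * (1 + norm (z - v))^kM * M v"
begin

lemma CM_nonneg: "CM \<ge> 0"
proof -
  have "0 \<le> CM * M 0 / (1 + norm (0::'a))" using Mgrad[of 0] norm_ge_zero order_trans by blast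
  then have "0 \<le> CM * M 0" by simp
  then show ?thesis using Mpos[of 0] by (simp add: zero_le_mult_iff)
qed

definition "LMc = 2 * CM * C0 * (3/2)^kM"

lemma LMc_nonneg: "LMc \<ge> 0"
  unfolding LMc_def using CM_nonneg C0pos by simp

lemma M_lip:
  assumes "norm (y - x) \<le> 1/2"
  shows "\<bar>M y - M x\<bar> \<le> LMc * M x / (1 + norm x) * norm (y - x)"
proof -
  have "\<bar>M y - M x\<bar> \<le> LMc * M x / (1 + norm x) * norm (y - x)"
  proof (rule grad_lipschitz[of "cball x (1/2)"])
    fix z assume z: "z \<in> cball x (1/2)"
    then have zx: "norm (z - x) \<le> 1/2" by (simp add: dist_norm norm_minus_commute)
    then have h: "1 + norm x \<le> 2 * (1 + norm z)" by (rule near_norm)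
    have "M z \<le> C0 * (1 + norm (z - x))^kM * M x" by (rule Mratio)
    also have "\<dots> \<le> C0 * (3/2)^kM * M x"
      using zx C0pos Mpos[of x] by (intro mult_right_mono mult_left_mono power_mono) auto
    finally have Mz: "M z \<le> C0 * (3/2)^kM * M x" .
    have "norm (grad M z) \<le> CM * M z / (1 + norm z)" by (rule Mgrad)
    also have "\<dots> \<le> (CM * (C0 * (3/2)^kM * M x)) / ((1 + norm x) / 2)"
    proof (rule frac_le)
      show "0 \<le> CM * (C0 * (3/2)^kM * M x)" using CM_nonneg C0pos Mpos[of x] by simp
      show "CM * M z \<le> CM * (C0 * (3/2)^kM * M x)" using Mz CM_nonneg by (rule mult_left_mono)
      show "0 < (1 + norm x) / 2" by (simp add: add_pos_nonneg)
      show "(1 + norm x) / 2 \<le> 1 + norm z" using h by simp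
    qed
    also have "\<dots> = LMc * M x / (1 + norm x)" by (simp add: LMc_def field_simps)
    finally show "norm (grad M z) \<le> LMc * M x / (1 + norm x)" .
  qed (use assms Mdiff in \<open>auto simp: dist_norm norm_minus_commute\<close>)
  then show ?thesis .
qed

lemma peetre:
  fixes E :: 'a
  assumes "norm E \<le> R" "0 \<le> s"
  shows "1 / (1 + norm (v - s *\<^sub>R E)) \<le> (1 + s * R) / (1 + norm v)"
proof -
  have "norm v \<le> norm (v - s *\<^sub>R E) + norm (s *\<^sub>R E)" using norm_triangle_ineq[of "v - s *\<^sub>R E" "s *\<^sub>R E"] by simp
  moreover have "norm (s *\<^sub>R E) \<le> s * R" using assms by (simp add: mult_left_mono)
  ultimately have n: "norm v \<le> norm (v - s *\<^sub>R E) + s * R" by linarith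
  have "(1 + norm (v - s *\<^sub>R E)) * (1 + s * R) = 1 + norm (v - s *\<^sub>R E) + s * R + norm (v - s *\<^sub>R E) * (s * R)"
    by (simp add: algebra_simps)
  moreover have "0 \<le> norm (v - s *\<^sub>R E) * (s * R)" using assms Rnn by simp
  ultimately have "1 + norm v \<le> (1 + norm (v - s *\<^sub>R E)) * (1 + s * R)" using n by linarith
  then show ?thesis by (simp add: field_simps add_pos_nonneg)
qed

lemma M_line:
  fixes E :: 'a
  assumes "norm E \<le> R" "0 \<le> s"
  shows "M (v - s *\<^sub>R E) \<le> C0 * (1 + s * R)^kM * M v"
proof -
  have "M (v - s *\<^sub>R E) \<le> C0 * (1 + norm ((v - s *\<^sub>R E) - v))^kM * M v" by (rule Mratio)
  also have "\<dots> \<le> C0 * (1 + s * R)^kM * M v"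
    using assms C0pos Mpos[of v] by (intro mult_right_mono mult_left_mono power_mono) (auto simp: mult_left_mono)
  finally show ?thesis .
qed

definition "Qc = 2 * Cg * \<nu>2 * (1 + LMc/2) + LMc * \<nu>2 + 2 * Cg"
definition "Bc = C0 * Qc * (1 + R)^(Suc kM)"
definition "Jc = (SOME J. \<forall>T\<ge>0. integral {0..T} (\<lambda>s. exp (- \<nu>1 * s) * (1+s)^(Suc (Suc kM))) \<le> J)"

lemma Jc: "T \<ge> 0 \<Longrightarrow> integral {0..T} (\<lambda>s. exp (- \<nu>1 * s) * (1+s)^(Suc (Suc kM))) \<le> Jc"
  unfolding Jc_def using someI_ex[OF exp_poly_int[OF nu1, of "Suc (Suc kM)"]] by blast

lemma nu2_nonneg: "\<nu>2 \<ge> 0" using sbnd[of 0 0] nu1 by linarith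

lemma Qc_nonneg: "Qc \<ge> 0"
  unfolding Qc_def using Cg_nonneg LMc_nonneg nu2_nonneg by simp

lemma Bc_nonneg: "Bc \<ge> 0"
  unfolding Bc_def using C0pos Qc_nonneg Rnn by simp

end

locale sol2 = sol + kin2 +
  assumes ER: "norm E \<le> R"
begin

lemma peetre': 
  assumes "0 \<le> r" "r \<le> s" "0 \<le> a"
  shows "a / (1 + norm (v - r *\<^sub>R E)) \<le> a * (1 + s * R) / (1 + norm v)"
proof -
  have "a / (1 + norm (v - r *\<^sub>R E)) = a * (1 / (1 + norm (v - r *\<^sub>R E)))" by simp
  also have "\<dots> \<le> a * ((1 + r * R) / (1 + norm v))"
    using peetre[OF ER assms(1)] assms(3) by (rule mult_left_mono)
  also have "\<dots> \<le> a * ((1 + s * R) / (1 + norm v))"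
    using assms Rnn by (intro mult_left_mono divide_right_mono) (auto intro: mult_right_mono add_pos_nonneg)
  finally show ?thesis by simp
qed

lemma Af_diff:
  assumes d: "norm (w - v) \<le> 1/2" and s: "0 \<le> s"
  shows "\<bar>Af w s - Af v s\<bar> \<le> s * (2 * Cg) * (1 + s * R) * (norm (w - v) / (1 + norm v))"
proof -
  have "Af w s - Af v s = integral {0..s} (\<lambda>r. nu (w - r *\<^sub>R E) - nu (v - r *\<^sub>R E))"
    unfolding Af_def
    by (rule integral_diff[symmetric]) (intro integrable_continuous_real nu_line_cont)+
  also have "\<bar>\<dots>\<bar> \<le> ((2 * Cg) * (1 + s * R) * (norm (w - v) / (1 + norm v))) * (s - 0)"
  proof -
    have "norm (integral {0..s} (\<lambda>r. nu (w - r *\<^sub>R E) - nu (v - r *\<^sub>R E)))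
        \<le> ((2 * Cg) * (1 + s * R) * (norm (w - v) / (1 + norm v))) * (s - 0)"
    proof (rule integral_bound[OF s])
      show "continuous_on {0..s} (\<lambda>r. nu (w - r *\<^sub>R E) - nu (v - r *\<^sub>R E))"
        by (intro continuous_intros nu_line_cont)
      fix r assume r: "r \<in> {0..s}"
      have yx: "norm ((w - r *\<^sub>R E) - (v - r *\<^sub>R E)) \<le> 1/2" using d by simp
      have "\<bar>nu (w - r *\<^sub>R E) - nu (v - r *\<^sub>R E)\<bar> \<le> 2 * Cg / (1 + norm (v - r *\<^sub>R E)) * norm (w - v)"
        using Kop_lip[OF Mint Mnn Mone yx] by simp
      also have "\<dots> \<le> (2 * Cg) * (1 + s * R) / (1 + norm v) * norm (w - v)"
        using peetre'[of r s "2 * Cg" v] r Cg_nonneg by (intro mult_right_mono) auto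
      finally show "norm (nu (w - r *\<^sub>R E) - nu (v - r *\<^sub>R E)) \<le> (2 * Cg) * (1 + s * R) * (norm (w - v) / (1 + norm v))"
        by simp
    qed
    then show ?thesis by simp
  qed
  finally show ?thesis by (simp add: algebra_simps)
qed

lemma gf_diff:
  assumes d: "norm (w - v) \<le> 1/2" and s: "0 \<le> s"
  shows "\<bar>gf w s - gf v s\<bar> \<le> Bc * (exp (- \<nu>1 * s) * (1+s)^(Suc (Suc kM))) * (M v / (1 + norm v) * norm (w - v))"
proof -
  define x where "x = v - s *\<^sub>R E"
  define y where "y = w - s *\<^sub>R E"
  define q where "q = 1 + s * R"
  define u1 where "u1 = norm (w - v) / (1 + norm v)"
  define e where "e = exp (- \<nu>1 * s)"
  have yx: "y - x = w - v" by (simp add: x_def y_def)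
  have d': "norm (y - x) \<le> 1/2" using d yx by simp
  have q0: "0 \<le> q" "1 \<le> q" using s Rnn by (auto simp: q_def)
  have u0: "0 \<le> u1" by (simp add: u1_def add_pos_nonneg)
  have ev: "exp (- Af v s) \<le> e" using Af_lower[OF s, of v] by (simp add: e_def)
  have ew: "exp (- Af w s) \<le> e" using Af_lower[OF s, of w] by (simp add: e_def)
  have dE: "\<bar>exp (- Af w s) - exp (- Af v s)\<bar> \<le> e * (s * (2 * Cg) * q * u1)"
  proof -
    have "\<bar>exp (- Af w s) - exp (- Af v s)\<bar> \<le> exp (- (\<nu>1 * s)) * \<bar>Af w s - Af v s\<bar>"
      by (rule exp_diff_bound[OF Af_lower[OF s] Af_lower[OF s]])
    also have "\<dots> \<le> e * (s * (2 * Cg) * q * u1)"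
      using mult_left_mono[OF Af_diff[OF d s], of "exp (- (\<nu>1 * s))"] by (simp add: e_def q_def u1_def)
    finally show ?thesis .
  qed
  have inv: "a / (1 + norm x) \<le> a * q * (1 / (1 + norm v))" if "0 \<le> a" for a
    using peetre'[of s s a v] s that by (simp add: x_def q_def)
  have dM0: "\<bar>M y - M x\<bar> \<le> LMc * M x / (1 + norm x) * norm (y - x)"
    by (rule M_lip[OF d'])
  have dM: "\<bar>M y - M x\<bar> \<le> LMc * M x * q * u1"
  proof -
    have "LMc * M x / (1 + norm x) \<le> LMc * M x * q * (1 / (1 + norm v))"
      using inv[of "LMc * M x"] LMc_nonneg Mnn[of x] by simp
    then have "LMc * M x / (1 + norm x) * norm (y - x) \<le> LMc * M x * q * (1 / (1 + norm v)) * norm (y - x)"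
      by (rule mult_right_mono) simp
    then show ?thesis using dM0 yx by (simp add: u1_def)
  qed
  have My: "M y \<le> (1 + LMc/2) * M x"
  proof -
    have "LMc * M x / (1 + norm x) \<le> LMc * M x"
      using divide_left_mono[of 1 "1 + norm x" "LMc * M x"] LMc_nonneg Mnn[of x] by (simp add: add_pos_nonneg)
    then have "LMc * M x / (1 + norm x) * norm (y - x) \<le> LMc * M x * (1/2)"
      using d' LMc_nonneg Mnn[of x] by (intro mult_mono) auto
    moreover have "(1 + LMc/2) * M x = M x + LMc * M x * (1/2)" by (simp add: algebra_simps)
    moreover have "M y - M x \<le> LMc * M x / (1 + norm x) * norm (y - x)" using abs_le_D1[OF dM0] .
    ultimately show ?thesis by linarith
  qed
  have dk: "\<bar>kk y - kk x\<bar> \<le> (2 * Cg) * q * u1"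
  proof -
    have "\<bar>kk y - kk x\<bar> \<le> 2 * Cg / (1 + norm x) * norm (y - x)" by (rule Kop_lip[OF Fint Fnn Fone d'])
    also have "\<dots> \<le> 2 * Cg * q * (1 / (1 + norm v)) * norm (y - x)"
      using inv[of "2 * Cg"] Cg_nonneg by (intro mult_right_mono) auto
    finally show ?thesis using yx by (simp add: u1_def)
  qed
  have Mx: "M x \<le> C0 * q^kM * M v" unfolding x_def q_def by (rule M_line[OF ER s])
  have main: "\<bar>exp (- Af w s) * (M y * kk y) - exp (- Af v s) * (M x * kk x)\<bar>
      \<le> e * (C0 * q^(Suc kM) * M v * u1) * (s * (2 * Cg) * (1 + LMc/2) * \<nu>2 + LMc * \<nu>2 + 2 * Cg)"
    by (rule arith_main[OF _ _ ev dE _ My _ kk_bounds(2) dM dk _ Mx])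
       (use s Cg_nonneg q0 u0 LMc_nonneg nu2_nonneg Mnn[of y] Mnn[of x] kk_bounds(1)[of y] nu1 in \<open>auto simp: e_def\<close>)
  have lhs: "gf w s - gf v s = exp (- Af w s) * (M y * kk y) - exp (- Af v s) * (M x * kk x)"
    by (simp add: gf_def x_def y_def)
  have c1: "s * (2 * Cg) * (1 + LMc/2) * \<nu>2 + LMc * \<nu>2 + 2 * Cg \<le> (1 + s) * Qc"
  proof -
    have "s * (2 * Cg) * (1 + LMc/2) * \<nu>2 \<le> (1 + s) * (2 * Cg * \<nu>2 * (1 + LMc/2))"
      using s Cg_nonneg LMc_nonneg nu2_nonneg by (simp add: algebra_simps mult_right_mono mult_nonneg_nonneg)
    moreover have "LMc * \<nu>2 + 2 * Cg \<le> (1 + s) * (LMc * \<nu>2 + 2 * Cg)"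
      using s Cg_nonneg LMc_nonneg nu2_nonneg by (simp add: algebra_simps mult_nonneg_nonneg)
    ultimately show ?thesis unfolding Qc_def by (simp add: algebra_simps)
  qed
  have c2: "q^(Suc kM) \<le> (1 + R)^(Suc kM) * (1 + s)^(Suc kM)"
  proof -
    have "q \<le> (1 + R) * (1 + s)" unfolding q_def using s Rnn by (simp add: algebra_simps mult_nonneg_nonneg)
    then have "q^(Suc kM) \<le> ((1 + R) * (1 + s))^(Suc kM)" using q0 by (intro power_mono) auto
    then show ?thesis by (simp only: power_mult_distrib)
  qed
  have pos: "0 \<le> e * (C0 * M v * u1)" using C0pos Mnn[of v] u0 by (simp add: e_def)
  have "e * (C0 * q^(Suc kM) * M v * u1) * (s * (2 * Cg) * (1 + LMc/2) * \<nu>2 + LMc * \<nu>2 + 2 * Cg)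
      = (e * (C0 * M v * u1)) * q^(Suc kM) * (s * (2 * Cg) * (1 + LMc/2) * \<nu>2 + LMc * \<nu>2 + 2 * Cg)"
    by (simp add: algebra_simps)
  also have "\<dots> \<le> (e * (C0 * M v * u1)) * ((1 + R)^(Suc kM) * (1 + s)^(Suc kM)) * ((1 + s) * Qc)"
  proof -
    have "0 \<le> s * (2 * Cg) * (1 + LMc/2) * \<nu>2 + LMc * \<nu>2 + 2 * Cg"
      using s Cg_nonneg LMc_nonneg nu2_nonneg by (simp add: mult_nonneg_nonneg)
    moreover have "0 \<le> (1 + R)^(Suc kM) * (1 + s)^(Suc kM)" using Rnn s by simp
    moreover have "(e * (C0 * M v * u1)) * q^(Suc kM) \<le> (e * (C0 * M v * u1)) * ((1 + R)^(Suc kM) * (1 + s)^(Suc kM))"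
      using c2 pos by (rule mult_left_mono)
    ultimately show ?thesis using pos c1 by (rule_tac mult_mono) (auto intro: mult_nonneg_nonneg)
  qed
  also have "\<dots> = Bc * (e * (1+s)^(Suc (Suc kM))) * (M v / (1 + norm v) * norm (w - v))"
    by (simp add: Bc_def u1_def power_Suc mult_ac divide_inverse)
  finally show ?thesis using main lhs by (simp add: e_def)
qed

end



context sol2 begin

lemma Ig_diff:
  assumes d: "norm (w - v) \<le> 1/2" and T: "0 \<le> T"
  shows "\<bar>Ig w T - Ig v T\<bar> \<le> Bc * Jc * (M v / (1 + norm v) * norm (w - v))"
proof -
  define u where "u = M v / (1 + norm v) * norm (w - v)"
  have u0: "u \<ge> 0" using Mnn[of v] by (simp add: u_def add_pos_nonneg)
  have "Ig w T - Ig v T = integral {0..T} (\<lambda>s. gf w s - gf v s)"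
    unfolding Ig_def by (rule integral_diff[symmetric]) (intro integrable_continuous_real gf_cont)+
  also have "\<bar>\<dots>\<bar> \<le> integral {0..T} (\<lambda>s. (Bc * u) * (exp (- \<nu>1 * s) * (1+s)^(Suc (Suc kM))))"
  proof -
    have "norm (integral {0..T} (\<lambda>s. gf w s - gf v s)) \<le> integral {0..T} (\<lambda>s. (Bc * u) * (exp (- \<nu>1 * s) * (1+s)^(Suc (Suc kM))))"
    proof (rule integral_norm_bound_integral)
      show "(\<lambda>s. gf w s - gf v s) integrable_on {0..T}"
        by (intro integrable_continuous_real continuous_intros gf_cont)
      show "(\<lambda>s. (Bc * u) * (exp (- \<nu>1 * s) * (1+s)^(Suc (Suc kM)))) integrable_on {0..T}"
        by (intro integrable_continuous_real continuous_intros)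
      fix s assume "s \<in> {0..T}"
      then have "\<bar>gf w s - gf v s\<bar> \<le> Bc * (exp (- \<nu>1 * s) * (1+s)^(Suc (Suc kM))) * u"
        using gf_diff[OF d] by (simp add: u_def)
      then show "norm (gf w s - gf v s) \<le> (Bc * u) * (exp (- \<nu>1 * s) * (1+s)^(Suc (Suc kM)))"
        by (simp add: mult_ac)
    qed
    then show ?thesis by simp
  qed
  also have "\<dots> = (Bc * u) * integral {0..T} (\<lambda>s. exp (- \<nu>1 * s) * (1+s)^(Suc (Suc kM)))"
    by (rule integral_mult_right)
  also have "\<dots> \<le> (Bc * u) * Jc"
    using Jc[OF T] Bc_nonneg u0 by (intro mult_left_mono) auto
  finally show ?thesis by (simp add: u_def mult_ac)
qed

lemma gf_nn: "0 \<le> gf v s" using gf_pos[of v s] by simp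

lemma Ig_mono:
  assumes "0 \<le> T1" "T1 \<le> T2"
  shows "Ig v T1 \<le> Ig v T2"
  unfolding Ig_def
proof (rule integral_subset_le)
  show "{0..T1} \<subseteq> {0..T2}" using assms by auto
  show "gf v integrable_on {0..T1}" "gf v integrable_on {0..T2}"
    by (intro integrable_continuous_real gf_cont)+
qed (use gf_nn in auto)

lemma Ig_le_F: "0 \<le> T \<Longrightarrow> Ig v T \<le> F v"
  using Ig_eq[of T v] hf_pos[of v T] by simp

definition "P v = (SUP n. Ig v (real n))"

lemma Ig_incseq: "incseq (\<lambda>n. Ig v (real n))"
  by (rule incseq_SucI) (rule Ig_mono, auto)

lemma Ig_bdd: "bdd_above (range (\<lambda>n. Ig v (real n)))"
  using Ig_le_F by (intro bdd_aboveI[of _ "F v"]) auto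

lemma Ig_lim: "(\<lambda>n. Ig v (real n)) \<longlonglongrightarrow> P v"
  unfolding P_def by (rule LIMSEQ_incseq_SUP[OF Ig_bdd Ig_incseq])

lemma P_ge: "Ig v (real n) \<le> P v"
  by (rule incseq_le[OF Ig_incseq Ig_lim])

lemma P_diff:
  assumes d: "norm (w - v) \<le> 1/2"
  shows "\<bar>P w - P v\<bar> \<le> Bc * Jc * (M v / (1 + norm v) * norm (w - v))"
proof (rule LIMSEQ_le_const2)
  show "(\<lambda>n. \<bar>Ig w (real n) - Ig v (real n)\<bar>) \<longlonglongrightarrow> \<bar>P w - P v\<bar>"
    by (intro tendsto_intros Ig_lim)
  show "\<exists>N. \<forall>n\<ge>N. \<bar>Ig w (real n) - Ig v (real n)\<bar> \<le> Bc * Jc * (M v / (1 + norm v) * norm (w - v))"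
    using Ig_diff[OF d] by auto
qed

lemma Jc_nonneg: "Jc \<ge> 0"
proof -
  have "integral {0..0} (\<lambda>s. exp (- \<nu>1 * s) * (1+s)^(Suc (Suc kM))) \<le> Jc" by (rule Jc) simp
  then show ?thesis by simp
qed

lemma P_cont: "continuous_on UNIV P"
proof -
  have "isCont P v" for v
  proof (rule lip_isCont)
    fix w :: 'a assume "norm (w - v) \<le> 1/2"
    then show "\<bar>P w - P v\<bar> \<le> (Bc * Jc * (M v / (1 + norm v))) * norm (w - v)"
      using P_diff by (simp add: mult_ac)
  qed (use Bc_nonneg Jc_nonneg Mnn in \<open>simp add: add_pos_nonneg\<close>)
  then show ?thesis by (simp add: continuous_at_imp_continuous_on)
qed

lemma Fcont: "continuous_on UNIV F"
  by (intro continuous_at_imp_continuous_on ballI differentiable_imp_continuous_within Fdiff)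

lemma P_le_F: "P v \<le> F v"
  by (rule LIMSEQ_le_const2[OF Ig_lim]) (use Ig_le_F in auto)

definition "cf v = F v - P v"

lemma cf_nn: "0 \<le> cf v" using P_le_F[of v] by (simp add: cf_def)

lemma cf_cont: "continuous_on UNIV cf"
  unfolding cf_def[abs_def] by (intro continuous_intros Fcont P_cont)

lemma cf_le: "cf v \<le> exp (- \<nu>1 * real n) * F (v - real n *\<^sub>R E)"
proof -
  have "cf v \<le> F v - Ig v (real n)" using P_ge[of v n] by (simp add: cf_def)
  also have "\<dots> = hf v (real n)" using Ig_eq[of "real n" v] by simp
  also have "\<dots> = F (v - real n *\<^sub>R E) * exp (- Af v (real n))" by (simp add: hf_def)
  also have "\<dots> \<le> F (v - real n *\<^sub>R E) * exp (- \<nu>1 * real n)"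
    using Af_lower[of "real n" v] Fnn by (intro mult_left_mono) auto
  finally show ?thesis by (simp add: mult_ac)
qed

lemma F_meas: "F \<in> borel_measurable borel"
  using borel_measurable_integrable[OF Fint] by simp

lemma F_shift:
  "integrable lborel (\<lambda>v. F (v - a)) \<and> (LINT v|lborel. F (v - a)) = 1"
proof -
  have g: "(+) (- a) \<in> measurable lborel borel" by simp
  have "integrable (distr lborel borel ((+) (- a))) F" using Fint by (simp add: lborel_distr_plus)
  then have i: "integrable lborel (\<lambda>v. F (- a + v))"
    using integrable_distr_eq[OF g F_meas] by simp
  have "(LINT v|lborel. F (- a + v)) = integral\<^sup>L (distr lborel borel ((+) (- a))) F"
    using integral_distr[OF g F_meas] by simp
  also have "\<dots> = 1" using Fone by (simp add: lborel_distr_plus)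
  finally show ?thesis using i by (simp add: add.commute)
qed

lemma cf_int: "integrable lborel cf"
proof (rule Bochner_Integration.integrable_bound[OF Fint])
  show "cf \<in> borel_measurable lborel" using borel_measurable_continuous_onI[OF cf_cont] by simp
  show "AE x in lborel. norm (cf x) \<le> norm (F x)"
    using cf_le[of _ 0] cf_nn Fnn by (intro AE_I2) (auto simp: abs_of_nonneg)
qed

lemma cf_int_le: "(LINT v|lborel. cf v) \<le> exp (- \<nu>1 * real n)"
proof -
  have "(LINT v|lborel. cf v) \<le> (LINT v|lborel. exp (- \<nu>1 * real n) * F (v - real n *\<^sub>R E))"
    using cf_int F_shift cf_le by (intro integral_mono) auto
  also have "\<dots> = exp (- \<nu>1 * real n)" using F_shift by simp
  finally show ?thesis .
qed

lemma cf_int0: "(LINT v|lborel. cf v) = 0"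
proof -
  have lim: "(\<lambda>n. exp (- \<nu>1 * real n)) \<longlonglongrightarrow> 0"
  proof -
    have "(\<lambda>n. (exp (- \<nu>1)) ^ n) \<longlonglongrightarrow> 0" using nu1 by (intro LIMSEQ_power_zero) simp
    moreover have "(exp (- \<nu>1)) ^ n = exp (- \<nu>1 * real n)" for n
      by (simp add: exp_of_nat_mult[symmetric] mult.commute)
    ultimately show ?thesis by simp
  qed
  have "(LINT v|lborel. cf v) \<le> 0"
    by (rule LIMSEQ_le_const[OF lim]) (use cf_int_le in auto)
  moreover have "0 \<le> (LINT v|lborel. cf v)" using cf_nn by (intro integral_nonneg_AE) auto
  ultimately show ?thesis by simp
qed

lemma cf_zero: "cf v = 0"
proof -
  have "AE x in lborel. cf x = 0"
    using integral_nonneg_eq_0_iff_AE[OF cf_int] cf_int0 cf_nn by auto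
  then have ae: "AE x \<in> UNIV in lebesgue. x \<in> {x. cf x = 0}"
    by (intro AE_completion) auto
  have "closed {x. cf x = 0}" using cf_cont by (intro closed_Collect_eq continuous_intros) auto
  then show ?thesis using mem_closed_if_AE_lebesgue_open[OF open_UNIV _ ae] by auto
qed

lemma F_eq_P: "F v = P v" using cf_zero[of v] by (simp add: cf_def)

lemma grad_bound: "norm (grad F v) \<le> Bc * Jc * M v / (1 + norm v)"
proof -
  define g where "g = grad F v"
  define L where "L = Bc * Jc * (M v / (1 + norm v))"
  have L0: "0 \<le> L" using Bc_nonneg Jc_nonneg Mnn[of v] by (simp add: L_def add_pos_nonneg)
  have "norm g \<le> L"
  proof (cases "g = 0")
    case True then show ?thesis using L0 by simp
  next
    case False
    define u where "u = g /\<^sub>R norm g"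
    have nu: "norm u = 1" using False by (simp add: u_def)
    have gu: "g \<bullet> u = norm g" using False by (simp add: u_def inner_commute power2_norm_eq_inner[symmetric] power2_eq_square)
    have l: "((\<lambda>t. v + t *\<^sub>R u) has_derivative (\<lambda>h. h *\<^sub>R u)) (at 0)"
      by (auto intro!: derivative_eq_intros)
    have "((\<lambda>t. F (v + t *\<^sub>R u)) has_derivative (\<lambda>h. g \<bullet> (h *\<^sub>R u))) (at 0)"
      using has_derivative_compose[OF l has_derivative_grad[OF Fdiff, of "v + 0 *\<^sub>R u"]] by (simp add: g_def)
    moreover have "(\<lambda>h. g \<bullet> (h *\<^sub>R u)) = (*) (norm g)" using gu by (auto simp: fun_eq_iff)
    ultimately have "((\<lambda>t. F (v + t *\<^sub>R u)) has_real_derivative norm g) (at 0)"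
      by (simp add: has_field_derivative_def)
    then have "((\<lambda>t. F (v + t *\<^sub>R u)) has_real_derivative norm g) (at 0 within {0<..})"
      by (rule has_field_derivative_at_within)
    then have lim: "((\<lambda>t. (F (v + t *\<^sub>R u) - F (v + 0 *\<^sub>R u)) / (t - 0)) \<longlongrightarrow> norm g) (at_right 0)"
      by (simp add: has_field_derivative_iff)
    have ev: "\<forall>\<^sub>F t in at_right 0. (F (v + t *\<^sub>R u) - F (v + 0 *\<^sub>R u)) / (t - 0) \<le> L"
    proof -
      show ?thesis unfolding eventually_at_right_field
      proof (intro exI[of _ "1/2"] conjI allI impI)
        fix t :: real assume t0: "0 < t" and t1: "t < 1/2"
        then have t: "t < 1/2 \<and> 0 < t" by simp
        have d: "norm ((v + t *\<^sub>R u) - v) \<le> 1/2" using t nu by simp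
        have "\<bar>P (v + t *\<^sub>R u) - P v\<bar> \<le> Bc * Jc * (M v / (1 + norm v) * norm ((v + t *\<^sub>R u) - v))"
          by (rule P_diff[OF d])
        also have "\<dots> = L * t" using t nu by (simp add: L_def)
        finally have "\<bar>P (v + t *\<^sub>R u) - P v\<bar> \<le> L * t" .
        moreover have "F (v + t *\<^sub>R u) - F v = P (v + t *\<^sub>R u) - P v"
          using F_eq_P[of "v + t *\<^sub>R u"] F_eq_P[of v] by linarith
        ultimately have "F (v + t *\<^sub>R u) - F v \<le> L * t" by linarith
        then show "(F (v + t *\<^sub>R u) - F (v + 0 *\<^sub>R u)) / (t - 0) \<le> L"
          using t by (simp add: divide_le_eq)
      qed simp
    qed
    show ?thesis
      by (rule tendsto_le[OF _ tendsto_const lim ev]) simp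
  qed
  then show ?thesis by (simp add: g_def L_def)
qed

end



theorem lemma2p10:
  fixes M :: "'a::euclidean_space \<Rightarrow> real"
    and \<sigma> :: "'a \<Rightarrow> 'a \<Rightarrow> real"
    and F :: "'a \<Rightarrow> 'a \<Rightarrow> real"
    and \<alpha> \<gamma> \<nu>\<^sub>0 \<nu>\<^sub>1 \<nu>\<^sub>2 :: real
  assumes alpha: "1 \<le> \<alpha>" "\<alpha> < 2"
    and M_pos: "\<forall>v. M v > 0"
    and M_even: "\<forall>v. M (- v) = M v"
    and M_meas: "M \<in> borel_measurable lborel"
    and M_int: "integrable lborel M" "(LINT v|lborel. M v) = 1"
    and M_tail: "\<gamma> > 0" "((\<lambda>v. norm v powr (real DIM('a) + \<alpha>) * M v) \<longlongrightarrow> \<gamma>) at_infinity"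
    and M_diff: "\<forall>v. M differentiable (at v)" "\<forall>v. grad M differentiable (at v)"
    and M_bounds: "\<exists>C. \<forall>v. norm (grad M v) \<le> C * M v / (1 + norm v) \<and>
                          onorm (frechet_derivative (grad M) (at v)) \<le> C * M v"
    and sigma_meas: "(\<lambda>(v, v'). \<sigma> v v') \<in> borel_measurable (lborel \<Otimes>\<^sub>M lborel)"
    and sigma_sym: "\<forall>v v'. \<sigma> v v' = \<sigma> v' v"
    and nu_pos: "0 < \<nu>\<^sub>1" "\<nu>\<^sub>1 \<le> \<nu>\<^sub>2"
    and sigma_bounds: "\<forall>v v'. \<nu>\<^sub>1 \<le> \<sigma> v v' \<and> \<sigma> v v' \<le> \<nu>\<^sub>2"
    and sigma_diff: "\<forall>v' v. \<sigma> v' differentiable (at v)"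
    and sigma_grad: "\<exists>C. \<forall>v v'. norm (grad (\<sigma> v') v) \<le> C / (1 + norm v)"
    and sigma_lim: "\<exists>C. \<forall>v v'. \<bar>\<sigma> v v' - \<nu>\<^sub>0\<bar> \<le> C / (1 + norm v)"
    and nu_even: "\<forall>v. (LINT v'|lborel. \<sigma> v' (- v) * M v') = (LINT v'|lborel. \<sigma> v' v * M v')"
    and F_sol: "\<forall>E. stationary_solution \<sigma> M E (F E)"
  shows "\<forall>R>0. \<exists>C. \<forall>E v. norm E \<le> R \<longrightarrow>
           norm (grad (F E) v) \<le> C * M v / (1 + norm v)"
proof (intro allI impI)
  fix R :: real assume R: "R > 0"
  obtain CM where CM: "\<And>v. norm (grad M v) \<le> CM * M v / (1 + norm v)" using M_bounds by blast
  obtain Cg where Cg: "\<And>v v'. norm (grad (\<sigma> v') v) \<le> Cg / (1 + norm v)" using sigma_grad by blast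
  interpret kin M \<sigma> \<nu>\<^sub>1 \<nu>\<^sub>2 Cg CM
  proof
    show "\<And>v. M v > 0" using M_pos by blast
    show "integrable lborel M" "(LINT v|lborel. M v) = 1" by (fact M_int(1), fact M_int(2))
    show "\<And>v. M differentiable (at v)" using M_diff(1) by blast
    show "\<And>v. norm (grad M v) \<le> CM * M v / (1 + norm v)" by (rule CM)
    show "(\<lambda>(v, v'). \<sigma> v v') \<in> borel_measurable (lborel \<Otimes>\<^sub>M lborel)" by (fact sigma_meas)
    show "\<And>v v'. \<sigma> v v' = \<sigma> v' v" using sigma_sym by blast
    show "0 < \<nu>\<^sub>1" by (fact nu_pos(1))
    show "\<And>v v'. \<nu>\<^sub>1 \<le> \<sigma> v v' \<and> \<sigma> v v' \<le> \<nu>\<^sub>2" using sigma_bounds by blast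
    show "\<And>v' v. \<sigma> v' differentiable (at v)" using sigma_diff by blast
    show "\<And>v v'. norm (grad (\<sigma> v') v) \<le> Cg / (1 + norm v)" by (rule Cg)
  qed
  define N where "N = real DIM('a) + \<alpha>"
  have N0: "N \<ge> 0" using alpha by (simp add: N_def)
  obtain c1 c2 where c: "c1 > 0" "\<forall>z. c1 \<le> M z * (1+norm z) powr N \<and> M z * (1+norm z) powr N \<le> c2"
    using tail_bounds[OF M_pos Mcont M_tail(1) _ N0] M_tail(2) unfolding N_def by blast
  define kM where "kM = nat \<lceil>N\<rceil>"
  define C0 where "C0 = c2 / c1"
  have C0: "C0 > 0"
  proof -
    have "c1 \<le> c2" using c(2) by (meson order_trans)
    then show ?thesis using c(1) by (simp add: C0_def)
  qed
  have ratio: "M z \<le> C0 * (1 + norm (z - v))^kM * M v" for z v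
  proof -
    have m: "M z \<le> C0 * (1 + norm (z - v)) powr N * M v"
      unfolding C0_def by (rule ratio_bound[OF M_pos c(1) N0 c(2)])
    have "(1 + norm (z - v)) powr N \<le> (1 + norm (z - v)) powr (real kM)"
    proof (rule powr_mono)
      have "N \<le> of_int \<lceil>N\<rceil>" by (rule le_of_int_ceiling)
      moreover have "(of_int \<lceil>N\<rceil> :: real) = real (nat \<lceil>N\<rceil>)" using N0 by simp
      ultimately show "N \<le> real kM" by (simp add: kM_def)
    qed simp
    also have "\<dots> = (1 + norm (z - v))^kM"
      by (rule powr_realpow) (simp add: add_pos_nonneg)
    finally have p: "(1 + norm (z - v)) powr N \<le> (1 + norm (z - v))^kM" .
    have "C0 * (1 + norm (z - v)) powr N * M v \<le> C0 * (1 + norm (z - v))^kM * M v"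
      using p C0 M_pos by (intro mult_right_mono mult_left_mono) (auto simp: less_imp_le)
    then show ?thesis using m by linarith
  qed
  interpret kin2 M \<sigma> \<nu>\<^sub>1 \<nu>\<^sub>2 Cg CM C0 kM R
    by unfold_locales (use C0 R ratio in auto)
  show "\<exists>C. \<forall>E v. norm E \<le> R \<longrightarrow> norm (grad (F E) v) \<le> C * M v / (1 + norm v)"
  proof (intro exI[of _ "Bc * Jc"] allI impI)
    fix E :: 'a and v assume ER: "norm E \<le> R"
    have S: "stationary_solution \<sigma> M E (F E)" using F_sol by blast
    interpret sol2 M \<sigma> \<nu>\<^sub>1 \<nu>\<^sub>2 Cg CM E "F E" C0 kM R
    proof unfold_locales
      show "\<And>v. F E v > 0" using S by (simp add: stationary_solution_def)
      show "integrable lborel (F E)" using S by (simp add: stationary_solution_def)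
      show "(LINT v|lborel. F E v) = 1" using S by (simp add: stationary_solution_def)
      show "\<And>v. F E differentiable (at v)" using S by (simp add: stationary_solution_def)
      show "\<And>v. E \<bullet> grad (F E) v - Qop \<sigma> M (F E) v = 0" using S by (simp add: stationary_solution_def)
      show "norm E \<le> R" by (fact ER)
    qed
    show "norm (grad (F E) v) \<le> Bc * Jc * M v / (1 + norm v)" by (rule grad_bound)
  qed
qed


end
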